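(* Let $\mathbf w=(w_1,\dots,w_n)$ be weights with $w_i\ge0$, $\sum_iw_i=1$, and suppose $w_i=s_i/d$ with $s_i\in\mathbb Z_{\ge0}$ and $d\in\mathbb Z_{>0}$. Then for all $\mathbf r=(r_1,\dots,r_n)\in[0,1]^n$, $$\mu_{\mathbf w}(\mathbf r)=\operatorname{median}\big(\underbrace{r_1,\dots,r_1}_{s_1},\dots,\underbrace{r_n,\dots,r_n}_{s_n},0,\tfrac1d,\tfrac2d,\dots,1-\tfrac1d,1\big),$$ where $\mu_{\mathbf w}(\mathbf r):=\sup\{y\in[0,1]:\sum_{i:\,r_i\ge y}w_i\ge y\}$.
   Context: The median of an odd number $2d+1$ of real numbers (here $\sum_i s_i=d$ entries from $\mathbf r$ plus the $d+1$ grid points) is its $(d+1)$-th smallest element. *)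

theory Defs
  imports Complex_Main
begin

definition mu_w :: "nat \<Rightarrow> (nat \<Rightarrow> real) \<Rightarrow> (nat \<Rightarrow> real) \<Rightarrow> real" where
  "mu_w n w r = Sup {y \<in> {0..1}. (\<Sum>i\<in>{i. i < n \<and> r i \<ge> y}. w i) \<ge> y}"

definition median :: "real list \<Rightarrow> real" where
  "median xs = sort xs ! (length xs div 2)"

end

theory Submission
  imports Defs
begin

lemma median_ge_iff:
  fixes xs :: "real list"
  assumes len: "length xs = 2*d+1"
  shows "t \<le> sort xs ! d \<longleftrightarrow> d+1 \<le> length (filter (\<lambda>x. t \<le> x) xs)"
proof -
  define ys where "ys = sort xs"
  have srt: "sorted ys" and ly: "length ys = 2*d+1" using len by (auto simp: ys_def)
  have "length (filter (\<lambda>x. t \<le> x) xs) = length (filter (\<lambda>x. t \<le> x) ys)"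
    by (simp add: ys_def filter_sort)
  also have "\<dots> = card {j. j < 2*d+1 \<and> t \<le> ys ! j}"
    by (simp add: length_filter_conv_card ly)
  finally have eq: "length (filter (\<lambda>x. t \<le> x) xs) = card {j. j < 2*d+1 \<and> t \<le> ys ! j}" .
  show ?thesis
  proof
    assume h: "t \<le> sort xs ! d"
    have "{d..<2*d+1} \<subseteq> {j. j < 2*d+1 \<and> t \<le> ys ! j}"
    proof
      fix j assume "j \<in> {d..<2*d+1}"
      then have "ys ! d \<le> ys ! j" "j < 2*d+1" using srt ly by (auto intro: sorted_nth_mono)
      then show "j \<in> {j. j < 2*d+1 \<and> t \<le> ys ! j}" using h ys_def by auto
    qed
    then have "card {d..<2*d+1} \<le> card {j. j < 2*d+1 \<and> t \<le> ys ! j}"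
      by (intro card_mono) auto
    then show "d+1 \<le> length (filter (\<lambda>x. t \<le> x) xs)" using eq by simp
  next
    assume h: "d+1 \<le> length (filter (\<lambda>x. t \<le> x) xs)"
    show "t \<le> sort xs ! d"
    proof (rule ccontr)
      assume "\<not> t \<le> sort xs ! d"
      then have lt: "ys ! d < t" by (simp add: ys_def)
      have "{j. j < 2*d+1 \<and> t \<le> ys ! j} \<subseteq> {d+1..<2*d+1}"
      proof
        fix j assume j: "j \<in> {j. j < 2*d+1 \<and> t \<le> ys ! j}"
        have "d < j"
        proof (rule ccontr)
          assume "\<not> d < j"
          then have "ys ! j \<le> ys ! d" using srt ly by (auto intro: sorted_nth_mono)
          then show False using j lt by auto
        qed
        then show "j \<in> {d+1..<2*d+1}" using j by auto
      qed
      then have "card {j. j < 2*d+1 \<and> t \<le> ys ! j} \<le> card {d+1..<2*d+1}"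
        by (intro card_mono) auto
      then show False using eq h by simp
    qed
  qed
qed

theorem mainTheorem11:
  fixes n :: nat and w r :: "nat \<Rightarrow> real" and s :: "nat \<Rightarrow> nat" and d :: nat
  assumes "\<And>i. i < n \<Longrightarrow> w i \<ge> 0"
    and "(\<Sum>i<n. w i) = 1"
    and "d > 0"
    and "\<And>i. i < n \<Longrightarrow> w i = real (s i) / real d"
    and "\<And>i. i < n \<Longrightarrow> r i \<in> {0..1}"
  shows "mu_w n w r =
    median (concat (map (\<lambda>i. replicate (s i) (r i)) [0..<n])
            @ map (\<lambda>k. real k / real d) [0..<d+1])"
proof -
  define A where "A = concat (map (\<lambda>i. replicate (s i) (r i)) [0..<n])"
  define B where "B = map (\<lambda>k. real k / real d) [0..<d+1]"
  define F where "F = (\<lambda>t. (\<Sum>i\<in>{i. i < n \<and> r i \<ge> t}. w i))"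
  define S where "S = {y \<in> {0..1}. F y \<ge> y}"
  have dpos: "real d > 0" using assms(3) by simp
  have "(\<Sum>i<n. real (s i) / real d) = 1" using assms(2,4) by simp
  then have "(\<Sum>i<n. real (s i)) = real d" using dpos
    by (simp add: sum_divide_distrib[symmetric] field_simps)
  then have sumS: "(\<Sum>i<n. s i) = d" by (metis of_nat_eq_iff of_nat_sum)
  have lenA: "length A = (\<Sum>i<n. s i)"
    by (simp add: A_def length_concat o_def sum_set_upt_conv_sum_list_nat[symmetric] atLeast0LessThan)
  have len: "length (A @ B) = 2*d+1" using lenA sumS by (simp add: B_def)
  have cntA: "length (filter (\<lambda>x. t \<le> x) A) = (\<Sum>i<n. if t \<le> r i then s i else 0)" for t
    by (simp add: A_def filter_concat length_concat o_def sum_set_upt_conv_sum_list_nat[symmetric] atLeast0LessThan filter_replicate, intro sum.cong, auto)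
  have cntB: "length (filter (\<lambda>x. t \<le> x) B) = d + 1 - nat \<lceil>t * d\<rceil>" for t
  proof -
    have "length (filter (\<lambda>x. t \<le> x) B) = card {k. k < d+1 \<and> t \<le> real k / real d}"
      unfolding B_def filter_map length_map o_def by (subst length_filter_conv_card, intro arg_cong[where f=card] Collect_cong conj_cong, simp_all del: upt_Suc)
    also have "{k. k < d+1 \<and> t \<le> real k / real d} = {nat \<lceil>t * d\<rceil>..<d+1}"
    proof -
      have "t \<le> real k / real d \<longleftrightarrow> nat \<lceil>t * d\<rceil> \<le> k" for k
      proof -
        have "t \<le> real k / real d \<longleftrightarrow> t * d \<le> real k" using dpos by (simp add: field_simps)
        also have "\<dots> \<longleftrightarrow> \<lceil>t * d\<rceil> \<le> int k" by (simp add: ceiling_le_iff)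
        also have "\<dots> \<longleftrightarrow> nat \<lceil>t * d\<rceil> \<le> k" by linarith
        finally show ?thesis .
      qed
      then show ?thesis unfolding set_eq_iff atLeastLessThan_iff mem_Collect_eq by auto
    qed
    finally show ?thesis by simp
  qed
  have Fs: "F t = real (\<Sum>i<n. if t \<le> r i then s i else 0) / real d" for t
  proof -
    have "F t = (\<Sum>i<n. if t \<le> r i then w i else 0)"
      unfolding F_def by (simp add: sum.inter_filter[symmetric] lessThan_def conj_commute)
    also have "\<dots> = (\<Sum>i<n. (if t \<le> r i then real (s i) else 0) / real d)"
      by (intro sum.cong) (auto simp: assms(4))
    also have "\<dots> = real (\<Sum>i<n. if t \<le> r i then s i else 0) / real d"
      unfolding sum_divide_distrib[symmetric] of_nat_sum by (intro arg_cong[where f="\<lambda>x. x / real d"] sum.cong) auto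
    finally show ?thesis .
  qed
  have key: "t \<le> median (A @ B) \<longleftrightarrow> t \<le> F t" if t: "t \<in> {0..1}" for t
  proof -
    define c where "c = (\<Sum>i<n. if t \<le> r i then s i else 0)"
    have "t * d \<le> d" using t dpos by (simp add: mult_left_le_one_le)
    then have cd: "\<lceil>t * d\<rceil> \<le> int d" by (simp add: ceiling_le_iff)
    have "t \<le> median (A @ B) \<longleftrightarrow> d+1 \<le> length (filter (\<lambda>x. t \<le> x) (A @ B))"
      unfolding median_def using median_ge_iff[OF len] len by simp
    also have "\<dots> \<longleftrightarrow> d + 1 \<le> c + (d + 1 - nat \<lceil>t * d\<rceil>)"
      by (simp add: cntA cntB c_def)
    also have "\<dots> \<longleftrightarrow> \<lceil>t * d\<rceil> \<le> int c" using cd by linarith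
    also have "\<dots> \<longleftrightarrow> t * d \<le> real c" by (simp add: ceiling_le_iff)
    also have "\<dots> \<longleftrightarrow> t \<le> real c / real d" using dpos by (simp add: field_simps)
    also have "\<dots> \<longleftrightarrow> t \<le> F t" by (simp add: Fs c_def)
    finally show ?thesis .
  qed
  define m where "m = median (A @ B)"
  have "length (A @ B) div 2 < length (sort (A @ B))" using len by simp
  then have "m \<in> set (A @ B)"
    unfolding m_def median_def by (metis nth_mem set_sort)
  then have m01: "m \<in> {0..1}"
    using assms(5) dpos by (auto simp: A_def B_def)
  have mS: "m \<in> S" using key[OF m01] m01 by (simp add: S_def m_def)
  have ub: "y \<le> m" if "y \<in> S" for y using key that by (auto simp: S_def m_def)
  have "mu_w n w r = Sup S" unfolding mu_w_def S_def F_def by simp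
  also have "\<dots> = m" using mS ub by (intro cSup_eq_maximum) auto
  finally show ?thesis by (simp add: m_def A_def B_def)
qed

end
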